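(* Let $S$ be an investment strategy with parameter space $\mathbb W=\mathcal W_k^\ell$ satisfying condition $(\mathrm L_\varepsilon)$ for some $\varepsilon\in(0,1)$. For each $t\ge0$ let $\zeta_t=\mathcal R_t/\int_{\mathbb W}\mathcal R_t\,d\mu$ and let $\bar\zeta_t$ be any probability density with respect to $\mu$ on $\mathbb W$ satisfying $\int_{\mathbb W}|\zeta_t-\bar\zeta_t|\,d\mu\le\frac{\varepsilon^2}{4m(t+1)^4}$. Let $\bar{\mathcal U}(S)$ be the parameter-free strategy with $\bar{\mathcal U}_t(S)=\int_{\mathbb W}S_t(\mathbf w)\bar\zeta_t(\mathbf w)\,d\mu(\mathbf w)$. Then (1) $\mathcal R_n(\bar{\mathcal U}(S))\ge(1-\varepsilon)\mathcal R_n(\mathcal U(S))$ for all $n\ge0$; (2) if $\mathcal U(S)$ is a universalization of $S$, then so is $\bar{\mathcal U}(S)$.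
   Context: Let $m\ge2$ and let $\mathbf x_0,\mathbf x_1,\dots\in(0,\infty)^m$ be return vectors. $\mathcal W_k=\{\mathbf w\in[0,1]^k:\sum_i w_i=1\}$. An investment strategy $S$ with parameter space $\mathbb W=\mathcal W_k^\ell$ assigns to each $t\ge0$, $\mathbf w\in\mathbb W$ a description $S_t(\mathbf w)\in\mathcal W_m$, measurable in $\mathbf w$; $\mathcal R_n(\mathbf w)=\prod_{t=0}^{n-1}S_t(\mathbf w)\cdot\mathbf x_t$ ($\mathcal R_0\equiv1$), $\mathcal L_n(S(\mathbf w))=\frac1n\log\mathcal R_n(\mathbf w)$; for parameter-free $U$, $\mathcal R_n(U)=\prod_{t<n}U_t\cdot\mathbf x_t$, $\mathcal L_n(U)=\frac1n\log\mathcal R_n(U)$. $\mu$ is the uniform probability measure on $\mathbb W$, and $\mathcal U(S)$ has $\mathcal U_t(S)=\int_{\mathbb W}S_t\mathcal R_t\,d\mu/\int_{\mathbb W}\mathcal R_t\,d\mu$. $U$ is a universalization of $S$ if there is $\eta_n\to0$, independent of market data, with $\mathcal L_n(U)\ge\sup_{\mathbf w}\mathcal L_n(S(\mathbf w))-\eta_n$ for all $n$ and all market sequences. Condition $(\mathrm L_\varepsilon)$: $S_{ti}(\mathbf w)\ge\frac{\varepsilon}{2m(t+1)^2}$ for all $t\ge0$, $1\le i\le m$, $\mathbf w\in\mathbb W$. *)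

theory Defs
  imports "HOL-Probability.Probability"
begin

(* A market sequence: x t i = return of asset i (i < m) in period t. *)
type_synonym market = "nat \<Rightarrow> nat \<Rightarrow> real"
(* A parameter w in W_k^l: w j i = i-th coordinate (i < k) of the j-th factor (j < l). *)
type_synonym param = "nat \<Rightarrow> nat \<Rightarrow> real"

definition prob_simplex :: "nat \<Rightarrow> (nat \<Rightarrow> real) set" where
  "prob_simplex k = {w. (\<forall>i<k. 0 \<le> w i \<and> w i \<le> 1) \<and> (\<Sum>i<k. w i) = 1}"

definition corner :: "nat \<Rightarrow> (nat \<Rightarrow> real) set" where
  "corner k = {y \<in> space (PiM {..<k-1} (\<lambda>_. lborel :: real measure)).
                 (\<forall>i<k-1. 0 \<le> y i) \<and> (\<Sum>i<k-1. y i) \<le> 1}"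

(* Embedding of the corner onto the prob_simplex W_k (points outside go to a vertex) *)
definition corner_emb :: "nat \<Rightarrow> (nat \<Rightarrow> real) \<Rightarrow> (nat \<Rightarrow> real)" where
  "corner_emb k y = (if y \<in> corner k
      then (\<lambda>i\<in>{..<k}. if i < k - 1 then y i else 1 - (\<Sum>j<k-1. y j))
      else (\<lambda>i\<in>{..<k}. if i = k - 1 then 1 else 0))"

(* Uniform probability measure on the prob_simplex W_k (image of normalized Lebesgue measure
   on the corner under the affine parametrization by the first k-1 coordinates). *)
definition simplex_measure :: "nat \<Rightarrow> (nat \<Rightarrow> real) measure" where
  "simplex_measure k =
     distr (uniform_measure (PiM {..<k-1} (\<lambda>_. lborel :: real measure)) (corner k))
           (restrict_space (PiM {..<k} (\<lambda>_. lborel :: real measure))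
                           (prob_simplex k \<inter> extensional {..<k}))
           (corner_emb k)"

definition param_measure :: "nat \<Rightarrow> nat \<Rightarrow> param measure" where
  "param_measure k l = PiM {..<l} (\<lambda>_. simplex_measure k)"

definition dotp :: "nat \<Rightarrow> (nat \<Rightarrow> real) \<Rightarrow> (nat \<Rightarrow> real) \<Rightarrow> real" where
  "dotp m s y = (\<Sum>i<m. s i * y i)"

definition valid_market :: "nat \<Rightarrow> market \<Rightarrow> bool" where
  "valid_market m x \<longleftrightarrow> (\<forall>t. \<forall>i<m. 0 < x t i)"

(* Strategies may depend on the market sequence x: S x t w is the description S_t(w). *)
definition is_strategy :: "nat \<Rightarrow> param measure \<Rightarrow> (market \<Rightarrow> nat \<Rightarrow> param \<Rightarrow> nat \<Rightarrow> real) \<Rightarrow> bool" where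
  "is_strategy m M S \<longleftrightarrow> (\<forall>x t. (\<forall>w\<in>space M. S x t w \<in> prob_simplex m)
       \<and> (\<forall>i<m. (\<lambda>w. S x t w i) \<in> borel_measurable M))"

definition wealth :: "nat \<Rightarrow> (market \<Rightarrow> nat \<Rightarrow> param \<Rightarrow> nat \<Rightarrow> real) \<Rightarrow> market \<Rightarrow> nat \<Rightarrow> param \<Rightarrow> real" where
  "wealth m S x n w = (\<Prod>t<n. dotp m (S x t w) (x t))"

definition wealth_pf :: "nat \<Rightarrow> (market \<Rightarrow> nat \<Rightarrow> nat \<Rightarrow> real) \<Rightarrow> market \<Rightarrow> nat \<Rightarrow> real" where
  "wealth_pf m U x n = (\<Prod>t<n. dotp m (U x t) (x t))"

definition growth :: "nat \<Rightarrow> (market \<Rightarrow> nat \<Rightarrow> param \<Rightarrow> nat \<Rightarrow> real) \<Rightarrow> market \<Rightarrow> nat \<Rightarrow> param \<Rightarrow> real" where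
  "growth m S x n w = ln (wealth m S x n w) / real n"

definition growth_pf :: "nat \<Rightarrow> (market \<Rightarrow> nat \<Rightarrow> nat \<Rightarrow> real) \<Rightarrow> market \<Rightarrow> nat \<Rightarrow> real" where
  "growth_pf m U x n = ln (wealth_pf m U x n) / real n"

definition univ_strat :: "nat \<Rightarrow> param measure \<Rightarrow> (market \<Rightarrow> nat \<Rightarrow> param \<Rightarrow> nat \<Rightarrow> real) \<Rightarrow> market \<Rightarrow> nat \<Rightarrow> nat \<Rightarrow> real" where
  "univ_strat m M S x t = (\<lambda>i. (\<integral>w. S x t w i * wealth m S x t w \<partial>M) / (\<integral>w. wealth m S x t w \<partial>M))"

definition zeta :: "nat \<Rightarrow> param measure \<Rightarrow> (market \<Rightarrow> nat \<Rightarrow> param \<Rightarrow> nat \<Rightarrow> real) \<Rightarrow> market \<Rightarrow> nat \<Rightarrow> param \<Rightarrow> real" where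
  "zeta m M S x t w = wealth m S x t w / (\<integral>v. wealth m S x t v \<partial>M)"

definition univ_bar :: "nat \<Rightarrow> param measure \<Rightarrow> (market \<Rightarrow> nat \<Rightarrow> param \<Rightarrow> nat \<Rightarrow> real) \<Rightarrow> (market \<Rightarrow> nat \<Rightarrow> param \<Rightarrow> real) \<Rightarrow> market \<Rightarrow> nat \<Rightarrow> nat \<Rightarrow> real" where
  "univ_bar m M S zb x t = (\<lambda>i. \<integral>w. S x t w i * zb x t w \<partial>M)"

definition prob_density :: "param measure \<Rightarrow> (param \<Rightarrow> real) \<Rightarrow> bool" where
  "prob_density M f \<longleftrightarrow> f \<in> borel_measurable M \<and> (AE w in M. 0 \<le> f w)
      \<and> integrable M f \<and> (\<integral>w. f w \<partial>M) = 1"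

definition cond_L :: "nat \<Rightarrow> real \<Rightarrow> param measure \<Rightarrow> (market \<Rightarrow> nat \<Rightarrow> param \<Rightarrow> nat \<Rightarrow> real) \<Rightarrow> bool" where
  "cond_L m \<epsilon> M S \<longleftrightarrow> (\<forall>x t. \<forall>i<m. \<forall>w\<in>space M. S x t w i \<ge> \<epsilon> / (2 * real m * (real t + 1)^2))"

definition universalization :: "nat \<Rightarrow> param measure \<Rightarrow> (market \<Rightarrow> nat \<Rightarrow> param \<Rightarrow> nat \<Rightarrow> real) \<Rightarrow> (market \<Rightarrow> nat \<Rightarrow> nat \<Rightarrow> real) \<Rightarrow> bool" where
  "universalization m M S U \<longleftrightarrow> (\<exists>\<eta> :: nat \<Rightarrow> real. \<eta> \<longlonglongrightarrow> 0 \<and>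
     (\<forall>x n. valid_market m x \<longrightarrow>
        growth_pf m U x n \<ge> (SUP w\<in>space M. growth m S x n w) - \<eta> n))"

end

theory Submission imports Defs begin

lemma key:
  fixes M :: "param measure" and s :: "param \<Rightarrow> nat \<Rightarrow> real" and W z :: "param \<Rightarrow> real"
  assumes Wm: "W \<in> borel_measurable M" and Wpos: "\<And>w. w \<in> space M \<Longrightarrow> 0 < W w"
    and sm: "\<And>i. i < m \<Longrightarrow> (\<lambda>w. s w i) \<in> borel_measurable M"
    and sb: "\<And>i w. i < m \<Longrightarrow> w \<in> space M \<Longrightarrow> \<bar>s w i\<bar> \<le> 1"
    and sc: "\<And>i w. i < m \<Longrightarrow> w \<in> space M \<Longrightarrow> c \<le> s w i"
    and pd: "prob_density M z"
    and d: "(\<integral>w. \<bar>W w / (\<integral>v. W v \<partial>M) - z w\<bar> \<partial>M) \<le> \<delta>" and d1: "\<delta> < 1"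
    and i: "i < m"
  shows "c \<le> (\<integral>w. s w i * W w \<partial>M) / (\<integral>w. W w \<partial>M)
      \<and> (\<integral>w. s w i * W w \<partial>M) / (\<integral>w. W w \<partial>M) - \<delta> \<le> (\<integral>w. s w i * z w \<partial>M)"
proof -
  define Z where "Z = (\<integral>v. W v \<partial>M)"
  have zm: "z \<in> borel_measurable M" and zae: "AE w in M. 0 \<le> z w" and zi: "integrable M z"
    and z1: "(\<integral>w. z w \<partial>M) = 1" using pd unfolding prob_density_def by auto
  have za: "(\<integral>w. \<bar>z w\<bar> \<partial>M) = 1"
  proof -
    have "(\<integral>w. \<bar>z w\<bar> \<partial>M) = (\<integral>w. z w \<partial>M)"
      by (rule integral_cong_AE) (use zm zae in auto)
    then show ?thesis using z1 by simp
  qed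
  have Z0: "Z \<noteq> 0"
  proof
    assume "Z = 0"
    then have "(\<lambda>w. \<bar>W w / Z - z w\<bar>) = (\<lambda>w. \<bar>z w\<bar>)" by simp
    then show False using d d1 za unfolding Z_def[symmetric] by simp
  qed
  have Wi: "integrable M W" using Z0 not_integrable_integral_eq unfolding Z_def by blast
  have Zp: "0 < Z" using Z0 integral_nonneg_AE[of W M] Wpos unfolding Z_def
    by (metis AE_I2 less_eq_real_def)
  define ze where "ze = (\<lambda>w. W w / Z)"
  have zei: "integrable M ze" unfolding ze_def using Wi by auto
  have ze1: "(\<integral>w. ze w \<partial>M) = 1" unfolding ze_def using Z0 by (simp add: Z_def)
  have zep: "\<And>w. w \<in> space M \<Longrightarrow> 0 \<le> ze w" unfolding ze_def using Wpos Zp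
    by (simp add: less_eq_real_def)
  have szi: "integrable M (\<lambda>w. s w i * ze w)"
    apply (rule Bochner_Integration.integrable_bound[OF zei])
    using sm[OF i] zei apply (simp add: borel_measurable_integrable)
    apply (rule AE_I2) using sb[OF i] zep by (auto simp: abs_mult intro!: mult_left_le_one_le)
  have U: "(\<integral>w. s w i * W w \<partial>M) / Z = (\<integral>w. s w i * ze w \<partial>M)"
  proof -
    have "(\<lambda>w. s w i * (W w / Z)) = (\<lambda>w. s w i * W w / Z)" by auto
    then show ?thesis unfolding ze_def by simp
  qed
  have A: "c \<le> (\<integral>w. s w i * ze w \<partial>M)"
  proof -
    have "(\<integral>w. c * ze w \<partial>M) \<le> (\<integral>w. s w i * ze w \<partial>M)"
      apply (rule integral_mono)
      using zei szi sc[OF i] zep by (auto intro: mult_right_mono)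
    then show ?thesis using ze1 by simp
  qed
  have zbi: "integrable M (\<lambda>w. s w i * z w)"
    apply (rule Bochner_Integration.integrable_bound[OF zi])
    using sm[OF i] zm apply simp
    apply (rule AE_I2) using sb[OF i] by (auto simp: abs_mult intro!: mult_left_le_one_le)
  have B: "(\<integral>w. s w i * ze w \<partial>M) - (\<integral>w. s w i * z w \<partial>M) \<le> \<delta>"
  proof -
    have "(\<integral>w. s w i * ze w \<partial>M) - (\<integral>w. s w i * z w \<partial>M) = (\<integral>w. s w i * ze w - s w i * z w \<partial>M)"
      using szi zbi by simp
    also have "\<dots> \<le> (\<integral>w. \<bar>ze w - z w\<bar> \<partial>M)"
      apply (rule integral_mono)
      using szi zbi zei zi apply auto[2]
    proof -
      fix w assume w: "w \<in> space M"
      have "s w i * ze w - s w i * z w = s w i * (ze w - z w)" by (simp add: algebra_simps)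
      also have "\<dots> \<le> \<bar>s w i\<bar> * \<bar>ze w - z w\<bar>" by (metis abs_ge_self abs_mult)
      also have "\<dots> \<le> \<bar>ze w - z w\<bar>" using sb[OF i w] by (simp add: mult_left_le_one_le)
      finally show "s w i * ze w - s w i * z w \<le> \<bar>ze w - z w\<bar>" .
    qed
    also have "\<dots> \<le> \<delta>" using d unfolding ze_def Z_def .
    finally show ?thesis .
  qed
  show ?thesis using A B U unfolding Z_def by simp
qed


lemma weier:
  fixes a :: "nat \<Rightarrow> real"
  assumes "\<And>t. 0 \<le> a t \<and> a t \<le> 1"
  shows "1 - (\<Sum>t<n. a t) \<le> (\<Prod>t<n. 1 - a t)"
proof (induction n)
  case 0 then show ?case by simp
next
  case (Suc n)
  have a: "0 \<le> a n" "a n \<le> 1" using assms by auto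
  have s: "0 \<le> (\<Sum>t<n. a t)" using assms by (simp add: sum_nonneg)
  have "1 - (\<Sum>t<Suc n. a t) \<le> (1 - (\<Sum>t<n. a t)) * (1 - a n)"
    using a s by (simp add: algebra_simps)
  also have "\<dots> \<le> (\<Prod>t<n. 1 - a t) * (1 - a n)"
    using Suc a by (intro mult_right_mono) auto
  finally show ?case by simp
qed

lemma sumsq: "(\<Sum>t<n. 1 / (real t + 1)^2) \<le> 2 - 2 / (real n + 1)"
proof (induction n)
  case 0 then show ?case by simp
next
  case (Suc n)
  have e: "2 / (real n + 1) - 2 / (real (Suc n) + 1) = 2 / ((real n + 1) * (real n + 2))"
    by (simp add: field_simps)
  have "1 / (real n + 1)^2 \<le> 2 / ((real n + 1) * (real n + 2))"
    by (simp add: divide_simps power2_eq_square)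
  then have "1 / (real n + 1)^2 \<le> 2 / (real n + 1) - 2 / (real (Suc n) + 1)" using e by simp
  then show ?case using Suc by simp
qed

theorem mainTheorem10:
  fixes m k l :: nat and \<epsilon> :: real
    and S :: "market \<Rightarrow> nat \<Rightarrow> param \<Rightarrow> nat \<Rightarrow> real"
    and zb :: "market \<Rightarrow> nat \<Rightarrow> param \<Rightarrow> real"
  assumes "m \<ge> 2" and "k \<ge> 1" and "0 < \<epsilon>" and "\<epsilon> < 1"
    and "is_strategy m (param_measure k l) S"
    and "cond_L m \<epsilon> (param_measure k l) S"
    and "\<And>x t. valid_market m x \<Longrightarrow> prob_density (param_measure k l) (zb x t)"
    and "\<And>x t. valid_market m x \<Longrightarrow>
           (\<integral>w. \<bar>zeta m (param_measure k l) S x t w - zb x t w\<bar> \<partial>param_measure k l)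
             \<le> \<epsilon>^2 / (4 * real m * (real t + 1)^4)"
  shows "(\<forall>x. valid_market m x \<longrightarrow> (\<forall>n.
            wealth_pf m (univ_bar m (param_measure k l) S zb) x n
              \<ge> (1 - \<epsilon>) * wealth_pf m (univ_strat m (param_measure k l) S) x n))
       \<and> (universalization m (param_measure k l) S (univ_strat m (param_measure k l) S)
            \<longrightarrow> universalization m (param_measure k l) S (univ_bar m (param_measure k l) S zb))"
proof -
  define M where "M = param_measure k l"
  define U where "U = univ_strat m M S"
  define Ub where "Ub = univ_bar m M S zb"
  have m0: "0 < m" using assms(1) by simp
  have step: "0 < dotp m (U x t) (x t) \<and>
      (1 - \<epsilon> / (2 * (real t + 1)^2)) * dotp m (U x t) (x t) \<le> dotp m (Ub x t) (x t)"
    if vx: "valid_market m x" for x t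
  proof -
    define c where "c = \<epsilon> / (2 * real m * (real t + 1)^2)"
    define \<delta> where "\<delta> = \<epsilon>^2 / (4 * real m * (real t + 1)^4)"
    define a where "a = \<epsilon> / (2 * (real t + 1)^2)"
    have c0: "0 < c" unfolding c_def using assms(3) m0 by simp
    have ac: "a * c = \<delta>" unfolding a_def c_def \<delta>_def by (simp add: field_simps power2_eq_square power4_eq_xxxx)
    have d1: "\<delta> < 1"
    proof -
      have "\<epsilon>^2 < 1" using assms(3,4) by (simp add: power_less_one_iff abs_less_iff power2_less_1_iff)
      moreover have "1 \<le> 4 * real m * (real t + 1)^4"
      proof -
        have "1 \<le> real m" using m0 by simp
        moreover have "1 \<le> (real t + 1)^4" by simp
        ultimately have "1 \<le> real m * (real t + 1)^4" using mult_mono[of 1 "real m" 1 "(real t+1)^4"] by simp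
        then show ?thesis by simp
      qed
      ultimately show ?thesis unfolding \<delta>_def by (simp add: divide_less_eq)
    qed
    have xpos: "\<And>i. i < m \<Longrightarrow> 0 < x t i" using vx unfolding valid_market_def by auto
    have Sp: "\<And>w. w \<in> space M \<Longrightarrow> S x t w \<in> prob_simplex m"
      and Sm: "\<And>s i. i < m \<Longrightarrow> (\<lambda>w. S x s w i) \<in> borel_measurable M"
      using assms(5) unfolding is_strategy_def M_def by auto
    have Sc: "\<And>i w. i < m \<Longrightarrow> w \<in> space M \<Longrightarrow> c \<le> S x t w i"
      using assms(6) unfolding cond_L_def M_def c_def by auto
    have Sb: "\<And>i w. i < m \<Longrightarrow> w \<in> space M \<Longrightarrow> \<bar>S x t w i\<bar> \<le> 1"
      using Sp unfolding prob_simplex_def by auto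
    have Wm: "wealth m S x t \<in> borel_measurable M"
      unfolding wealth_def dotp_def
      by (intro borel_measurable_prod borel_measurable_sum borel_measurable_times Sm) auto
    have Wp: "0 < wealth m S x t w" if w: "w \<in> space M" for w
      unfolding wealth_def dotp_def
    proof (intro prod_pos ballI)
      fix s assume "s \<in> {..<t}"
      have "\<And>i. i \<in> {..<m} \<Longrightarrow> 0 < S x s w i * x s i"
      proof -
        fix i assume i: "i \<in> {..<m}"
        have "0 < \<epsilon> / (2 * real m * (real s + 1)^2)" using assms(3) m0 by simp
        also have "\<dots> \<le> S x s w i" using assms(6) w i unfolding cond_L_def M_def by auto
        finally have "0 < S x s w i" .
        moreover have "0 < x s i" using vx i unfolding valid_market_def by auto
        ultimately show "0 < S x s w i * x s i" by simp
      qed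
      then show "0 < (\<Sum>i<m. S x s w i * x s i)" using m0 by (intro sum_pos) auto
    qed
    have pd: "prob_density M (zb x t)" using assms(7) vx unfolding M_def by auto
    have d: "(\<integral>w. \<bar>wealth m S x t w / (\<integral>v. wealth m S x t v \<partial>M) - zb x t w\<bar> \<partial>M) \<le> \<delta>"
      using assms(8)[OF vx, of t] unfolding zeta_def M_def \<delta>_def by simp
    have K: "c \<le> U x t i \<and> U x t i - \<delta> \<le> Ub x t i" if i: "i < m" for i
      using key[OF Wm Wp Sm[of _ t] Sb Sc pd d d1 i] unfolding U_def Ub_def univ_strat_def univ_bar_def by simp
    have "0 < dotp m (U x t) (x t)" unfolding dotp_def
    proof (intro sum_pos)
      fix i assume "i \<in> {..<m}"
      then have i: "i < m" by simp
      have "0 < U x t i" using K[OF i] c0 by linarith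
      then show "0 < U x t i * x t i" using xpos[OF i] by simp
    qed (use m0 in auto)
    moreover have "(1 - a) * dotp m (U x t) (x t) \<le> dotp m (Ub x t) (x t)"
      unfolding dotp_def sum_distrib_left
    proof (rule sum_mono)
      fix i assume "i \<in> {..<m}"
      then have i: "i < m" by simp
      have "(1 - a) * U x t i = U x t i - a * U x t i" by (simp add: algebra_simps)
      also have "\<dots> \<le> U x t i - \<delta>" unfolding ac[symmetric]
        using K[OF i] a_def assms(3) by (intro diff_left_mono mult_left_mono) auto
      also have "\<dots> \<le> Ub x t i" using K[OF i] by simp
      finally show "(1 - a) * (U x t i * x t i) \<le> Ub x t i * x t i"
        using xpos[OF i] by (metis mult.assoc mult_right_mono less_imp_le)
    qed
    ultimately show ?thesis unfolding a_def by simp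
  qed
  have P1: "(1 - \<epsilon>) * wealth_pf m U x n \<le> wealth_pf m Ub x n" if vx: "valid_market m x" for x n
  proof -
    define a where "a = (\<lambda>t. \<epsilon> / (2 * (real t + 1)^2))"
    have a01: "\<And>t. 0 \<le> a t \<and> a t \<le> 1"
    proof
      fix t
      show "0 \<le> a t" unfolding a_def using assms(3) by simp
      have "1 \<le> (real t + 1)^2" by simp
      then have "1 \<le> 2 * (real t + 1)^2" by linarith
      then show "a t \<le> 1" unfolding a_def using assms(4) by (simp add: divide_le_eq)
    qed
    have sa: "(\<Sum>t<n. a t) = \<epsilon> / 2 * (\<Sum>t<n. 1 / (real t + 1)^2)"
      unfolding a_def sum_distrib_left by (simp add: field_simps)
    have "(\<Sum>t<n. a t) \<le> \<epsilon>"
    proof -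
      have "(\<Sum>t<n. 1 / (real t + 1)^2) \<le> 2" using sumsq[of n] by (smt (verit) divide_nonneg_nonneg of_nat_0_le_iff)
      then have "\<epsilon> / 2 * (\<Sum>t<n. 1 / (real t + 1)^2) \<le> \<epsilon> / 2 * 2"
        using assms(3) by (intro mult_left_mono) auto
      then show ?thesis unfolding sa by simp
    qed
    have Rp: "0 \<le> wealth_pf m U x n" unfolding wealth_pf_def
      using step[OF vx] by (intro prod_nonneg) (auto intro: less_imp_le)
    have "(1 - \<epsilon>) * wealth_pf m U x n \<le> (1 - (\<Sum>t<n. a t)) * wealth_pf m U x n"
      using Rp \<open>(\<Sum>t<n. a t) \<le> \<epsilon>\<close> by (intro mult_right_mono) auto
    also have "\<dots> \<le> (\<Prod>t<n. 1 - a t) * wealth_pf m U x n"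
      using Rp weier[OF a01] by (intro mult_right_mono) auto
    also have "\<dots> = (\<Prod>t<n. (1 - a t) * dotp m (U x t) (x t))"
      unfolding wealth_pf_def prod.distrib by simp
    also have "\<dots> \<le> wealth_pf m Ub x n" unfolding wealth_pf_def
    proof (intro prod_mono conjI)
      fix t assume "t \<in> {..<n}"
      show "0 \<le> (1 - a t) * dotp m (U x t) (x t)"
        using step[OF vx, of t] a01[of t] by (intro mult_nonneg_nonneg) auto
      show "(1 - a t) * dotp m (U x t) (x t) \<le> dotp m (Ub x t) (x t)"
        using step[OF vx, of t] unfolding a_def by simp
    qed
    finally show ?thesis .
  qed
  have P2: "universalization m M S Ub" if uU: "universalization m M S U"
  proof -
    obtain \<eta> where eta: "\<eta> \<longlonglongrightarrow> 0"
      and hall: "\<forall>x n. valid_market m x \<longrightarrow> growth_pf m U x n \<ge> (SUP w\<in>space M. growth m S x n w) - \<eta> n"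
      using uU unfolding universalization_def by blast
    have h: "\<And>x n. valid_market m x \<Longrightarrow> growth_pf m U x n \<ge> (SUP w\<in>space M. growth m S x n w) - \<eta> n"
      using hall by blast
    define \<eta>' where "\<eta>' = (\<lambda>n. \<eta> n - ln (1 - \<epsilon>) / real n)"
    have "(\<lambda>n. ln (1 - \<epsilon>) / real n) \<longlonglongrightarrow> 0"
      by (intro tendsto_divide_0[OF tendsto_const] filterlim_at_top_imp_at_infinity filterlim_real_sequentially)
    from tendsto_diff[OF eta this] have "\<eta>' \<longlonglongrightarrow> 0 - 0" unfolding \<eta>'_def .
    then have "\<eta>' \<longlonglongrightarrow> 0" by simp
    moreover have "growth_pf m Ub x n \<ge> (SUP w\<in>space M. growth m S x n w) - \<eta>' n"
      if vx: "valid_market m x" for x n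
    proof (cases "n = 0")
      case True
      have g: "growth_pf m Ub x n = growth_pf m U x n" unfolding growth_pf_def True by simp
      have e: "\<eta>' n = \<eta> n" unfolding \<eta>'_def True by simp
      show ?thesis using h[OF vx, of n] unfolding g e .
    next
      case False
      have Rp: "0 < wealth_pf m U x n" unfolding wealth_pf_def
        using step[OF vx] by (intro prod_pos) auto
      have e: "0 < 1 - \<epsilon>" using assms(4) by simp
      have "ln ((1 - \<epsilon>) * wealth_pf m U x n) \<le> ln (wealth_pf m Ub x n)"
        using P1[OF vx, of n] Rp e by (intro ln_mono) auto
      then have "ln (1 - \<epsilon>) + ln (wealth_pf m U x n) \<le> ln (wealth_pf m Ub x n)"
        using Rp e by (simp add: ln_mult)
      then have "(ln (1 - \<epsilon>) + ln (wealth_pf m U x n)) / real n \<le> ln (wealth_pf m Ub x n) / real n"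
        by (rule divide_right_mono) simp
      then have "ln (1 - \<epsilon>) / real n + growth_pf m U x n \<le> growth_pf m Ub x n"
        unfolding growth_pf_def add_divide_distrib .
      moreover have "(SUP w\<in>space M. growth m S x n w) - \<eta> n \<le> growth_pf m U x n" using h[OF vx, of n] .
      ultimately show ?thesis unfolding \<eta>'_def by linarith
    qed
    ultimately show ?thesis unfolding universalization_def by blast
  qed
  show ?thesis using P1 P2 unfolding M_def U_def Ub_def by blast
qed

end
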